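(* Let $m=pq$ with $p,q$ distinct primes, let $(K_n,\alpha)$ be an edge-labeled complete graph over $\mathbb{Z}/m\mathbb{Z}$ on $v_1,\dots,v_n$ (every edge labeled by $\langle p\rangle$ or $\langle q\rangle$), and let $(K_{n+1},\alpha)$ be obtained by adding a vertex $v_{n+1}$ joined to each of $v_1,\dots,v_n$ (the star $S_n$), keeping the labels on the edges of $K_n$ and labeling the new edges $v_jv_{n+1}$ by $\langle p\rangle$ or $\langle q\rangle$. Suppose that $[\mathbb{Z}/m\mathbb{Z}]_{(K_n,\alpha)}$ has a minimum generating set consisting of the trivial spline $(1,\dots,1)$ and $i-1$ other flow-up splines (for some $1<i\le n$), each of whose entries lies in the ideal $\langle p\rangle$. Then: (a) if all edge labels of the added star $S_n$ are contained in $\langle p\rangle$, then $\operatorname{rk}[\mathbb{Z}/m\mathbb{Z}]_{(K_{n+1},\alpha)}=\operatorname{rk}[\mathbb{Z}/m\mathbb{Z}]_{(K_n,\alpha)}+1$; (b) if exactly one edge label of the added star $S_n$ is contained in $\langle q\rangle$ and the others are contained in $\langle p\rangle$, then $\operatorname{rk}[\mathbb{Z}/m\mathbb{Z}]_{(K_{n+1},\alpha)}=\operatorname{rk}[\mathbb{Z}/m\mathbb{Z}]_{(K_n,\alpha)}$.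
   Context: Edges are labeled by nonzero proper ideals of $\mathbb{Z}/m\mathbb{Z}$. A spline on an edge-labeled graph $(G,\alpha)$ over $\mathbb{Z}/m\mathbb{Z}$ is a vector $(f_{v_1},\dots,f_{v_n})\in(\mathbb{Z}/m\mathbb{Z})^n$ with $f_{v_i}-f_{v_j}\in\alpha(v_iv_j)$ for every edge; the splines form a $\mathbb{Z}$-module $[\mathbb{Z}/m\mathbb{Z}]_{(G,\alpha)}$. An $i$-th flow-up class (flow-up spline) is a spline with $f_{v_i}\ne0$ and $f_{v_t}=0$ for $t<i$. A minimum generating set is a generating set of the $\mathbb{Z}$-module of smallest possible size; that size is the rank $\operatorname{rk}$. *)

theory Defs
  imports "HOL-Computational_Algebra.Primes"
begin

text \<open>Elements of Z/mZ are represented by their canonical representatives in [0,m).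
  Vertices are 1..N. An edge label is given by an integer generator a (with a dividing m),
  standing for the ideal generated by a in Z/mZ; for representatives x,y we have
  x - y in that ideal iff a divides x - y as integers.
  A vertex labeling lab u v gives the label of the edge uv of the complete graph K_N.\<close>

definition splines :: "int \<Rightarrow> (nat \<Rightarrow> nat \<Rightarrow> int) \<Rightarrow> nat \<Rightarrow> (nat \<Rightarrow> int) set" where
  "splines m lab N = {f. (\<forall>v. v \<notin> {1..N} \<longrightarrow> f v = 0)
      \<and> (\<forall>v\<in>{1..N}. 0 \<le> f v \<and> f v < m)
      \<and> (\<forall>u\<in>{1..N}. \<forall>v\<in>{1..N}. u \<noteq> v \<longrightarrow> lab u v dvd f u - f v)}"

definition is_gen_set :: "int \<Rightarrow> nat \<Rightarrow> (nat \<Rightarrow> int) set \<Rightarrow> (nat \<Rightarrow> int) set \<Rightarrow> bool" where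
  "is_gen_set m N S G \<longleftrightarrow> finite G \<and> G \<subseteq> S \<and>
     (\<forall>s\<in>S. \<exists>c :: (nat \<Rightarrow> int) \<Rightarrow> int. \<forall>v\<in>{1..N}. s v = (\<Sum>g\<in>G. c g * g v) mod m)"

definition rk :: "int \<Rightarrow> nat \<Rightarrow> (nat \<Rightarrow> int) set \<Rightarrow> nat" where
  "rk m N S = (LEAST k. \<exists>G. is_gen_set m N S G \<and> card G = k)"

definition min_gen_set :: "int \<Rightarrow> nat \<Rightarrow> (nat \<Rightarrow> int) set \<Rightarrow> (nat \<Rightarrow> int) set \<Rightarrow> bool" where
  "min_gen_set m N S G \<longleftrightarrow> is_gen_set m N S G \<and> card G = rk m N S"

definition flow_up :: "nat \<Rightarrow> (nat \<Rightarrow> int) \<Rightarrow> nat \<Rightarrow> bool" where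
  "flow_up N f k \<longleftrightarrow> k \<in> {1..N} \<and> f k \<noteq> 0 \<and> (\<forall>t\<in>{1..N}. t < k \<longrightarrow> f t = 0)"

definition trivial_spline :: "nat \<Rightarrow> nat \<Rightarrow> int" where
  "trivial_spline N = (\<lambda>v. if v \<in> {1..N} then 1 else 0)"

end

theory Submission
  imports Defs "HOL-Library.FuncSet" "HOL-Number_Theory.Cong"
begin


lemma rk_le: "is_gen_set m N S G \<Longrightarrow> rk m N S \<le> card G"
  unfolding rk_def by (rule Least_le) blast

lemma rk_attained: "is_gen_set m N S G0 \<Longrightarrow> \<exists>G. is_gen_set m N S G \<and> card G = rk m N S"
  unfolding rk_def by (rule LeastI_ex) blast

lemma rk_ge:
  assumes "is_gen_set m N S G0" "\<And>G. is_gen_set m N S G \<Longrightarrow> X \<le> card G"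
  shows "X \<le> rk m N S"
  using rk_attained[OF assms(1)] assms(2) by metis

lemma gen_coeffs:
  assumes "is_gen_set m N S G" "s \<in> S"
  shows "\<exists>c. \<forall>v\<in>{1..N}. s v = (\<Sum>g\<in>G. c g * g v) mod m"
  using assms unfolding is_gen_set_def by blast

lemma family_gen:
  assumes fin: "finite I" and sub: "E ` I \<subseteq> S"
    and gen: "\<forall>s\<in>S. \<exists>d. \<forall>v\<in>{1..N}. s v = (\<Sum>i\<in>I. d i * E i v) mod m"
  shows "is_gen_set m N S (E ` I)"
  unfolding is_gen_set_def
proof (intro conjI ballI)
  show "finite (E ` I)" using fin by simp
  show "E ` I \<subseteq> S" by fact
  fix s assume "s \<in> S"
  then obtain d where d: "\<forall>v\<in>{1..N}. s v = (\<Sum>i\<in>I. d i * E i v) mod m" using gen by blast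
  define c where "c x = sum d {i\<in>I. E i = x}" for x
  have "\<forall>v\<in>{1..N}. s v = (\<Sum>x\<in>E ` I. c x * x v) mod m"
  proof
    fix v assume v: "v \<in> {1..N}"
    have "(\<Sum>x\<in>E ` I. c x * x v) = (\<Sum>x\<in>E ` I. \<Sum>i\<in>{i\<in>I. E i = x}. d i * E i v)"
      unfolding c_def sum_distrib_right by (rule sum.cong) auto
    also have "\<dots> = (\<Sum>i\<in>I. d i * E i v)"
      by (rule sum.image_gen[symmetric, OF fin])
    finally show "s v = (\<Sum>x\<in>E ` I. c x * x v) mod m" using d v by simp
  qed
  then show "\<exists>c. \<forall>v\<in>{1..N}. s v = (\<Sum>g\<in>E ` I. c g * g v) mod m" by blast
qed

lemma modlem: "(c * (x mod m) + y) mod m = (c * x + y) mod (m::int)"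
  by (metis mod_add_left_eq mod_mult_right_eq)

lemma dvd_mod_diff:
  fixes l m A B :: int
  assumes "l dvd m" "l dvd A - B"
  shows "l dvd A mod m - B mod m"
proof -
  have "A mod m - B mod m = (A - B) - m * (A div m - B div m)"
    by (simp add: minus_div_mult_eq_mod[symmetric] algebra_simps)
  then show ?thesis using assms by simp
qed

lemma redundant:
  assumes gs: "is_gen_set m N S G" and g0: "g0 \<in> G"
    and e: "\<forall>v\<in>{1..N}. g0 v = (\<Sum>g\<in>G-{g0}. e g * g v) mod m"
  shows "is_gen_set m N S (G - {g0})"
  unfolding is_gen_set_def
proof (intro conjI ballI)
  have fin: "finite G" using gs unfolding is_gen_set_def by blast
  show "finite (G - {g0})" using fin by simp
  show "G - {g0} \<subseteq> S" using gs unfolding is_gen_set_def by blast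
  fix s assume "s \<in> S"
  then obtain c where c: "\<forall>v\<in>{1..N}. s v = (\<Sum>g\<in>G. c g * g v) mod m"
    using gs unfolding is_gen_set_def by blast
  have "\<forall>v\<in>{1..N}. s v = (\<Sum>g\<in>G-{g0}. (c g + c g0 * e g) * g v) mod m"
  proof
    fix v assume v: "v \<in> {1..N}"
    have "s v = (c g0 * g0 v + (\<Sum>g\<in>G-{g0}. c g * g v)) mod m"
      using c v fin g0 by (simp add: sum.remove)
    also have "\<dots> = (c g0 * (\<Sum>g\<in>G-{g0}. e g * g v) + (\<Sum>g\<in>G-{g0}. c g * g v)) mod m"
      using e v modlem by simp
    also have "\<dots> = (\<Sum>g\<in>G-{g0}. (c g + c g0 * e g) * g v) mod m"
      by (simp add: sum_distrib_left sum.distrib[symmetric] algebra_simps)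
    finally show "s v = (\<Sum>g\<in>G-{g0}. (c g + c g0 * e g) * g v) mod m" .
  qed
  then show "\<exists>c. \<forall>v\<in>{1..N}. s v = (\<Sum>g\<in>G-{g0}. c g * g v) mod m"
    by (intro exI[where x="\<lambda>g. c g + c g0 * e g"])
qed

lemma eq_of_dvd:
  fixes a b m :: int
  assumes "0 \<le> a" "a < m" "0 \<le> b" "b < m" "m dvd a - b"
  shows "a = b"
proof -
  have "a mod m = b mod m" using assms(5) by (simp add: mod_eq_dvd_iff)
  then show ?thesis using assms by simp
qed

lemma crt_dvd:
  fixes p q x :: int
  assumes "prime p" "prime q" "p \<noteq> q" "p dvd x" "q dvd x"
  shows "p * q dvd x"
  using assms by (simp add: divides_mult primes_coprime)

lemma comb_spline:
  fixes m :: int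
  assumes fin: "finite I" and E: "\<forall>x\<in>I. E x \<in> splines m lab N" and m: "m > 0"
    and labd: "\<forall>u\<in>{1..N}. \<forall>v\<in>{1..N}. u \<noteq> v \<longrightarrow> lab u v dvd m"
  shows "(\<lambda>v. if v \<in> {1..N} then (\<Sum>x\<in>I. d x * E x v) mod m else 0) \<in> splines m lab N"
  unfolding splines_def
proof (intro CollectI conjI ballI allI impI)
  fix u v assume u: "u \<in> {1..N}" and v: "v \<in> {1..N}" and uv: "u \<noteq> v"
  have l: "lab u v dvd m" using labd u v uv by blast
  have "lab u v dvd (\<Sum>x\<in>I. d x * E x u) - (\<Sum>x\<in>I. d x * E x v)"
    unfolding sum_subtractf[symmetric] right_diff_distrib[symmetric]
    using E u v uv unfolding splines_def by (intro dvd_sum dvd_mult) auto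
  then have "lab u v dvd (\<Sum>x\<in>I. d x * E x u) mod m - (\<Sum>x\<in>I. d x * E x v) mod m"
    using l dvd_mod_diff by blast
  then show "lab u v dvd (if u \<in> {1..N} then (\<Sum>x\<in>I. d x * E x u) mod m else 0) -
        (if v \<in> {1..N} then (\<Sum>x\<in>I. d x * E x v) mod m else 0)" using u v by simp
qed (use m in auto)



lemma dvd_mod_self_diff:
  fixes l m A :: int
  assumes "l dvd m"
  shows "l dvd A mod m - A"
proof -
  have "A mod m - A = - (m * (A div m))"
    by (simp add: minus_div_mult_eq_mod[symmetric] algebra_simps)
  then show ?thesis using assms by simp
qed

lemma sum_mod_coef:
  fixes q :: int
  shows "(\<Sum>g\<in>A. (c g mod q) * x g) mod q = (\<Sum>g\<in>A. c g * x g) mod q"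
proof -
  have "(\<Sum>g\<in>A. (c g mod q) * x g) mod q = (\<Sum>g\<in>A. ((c g mod q) * x g) mod q) mod q"
    by (simp add: mod_sum_eq)
  also have "\<dots> = (\<Sum>g\<in>A. (c g * x g) mod q) mod q"
    by (simp add: mod_mult_left_eq)
  also have "\<dots> = (\<Sum>g\<in>A. c g * x g) mod q" by (simp add: mod_sum_eq)
  finally show ?thesis .
qed

lemma extend_spline:
  assumes g: "g \<in> splines m lab n" and x: "0 \<le> x" "x < m"
    and e: "\<forall>v\<in>{1..n}. lab v (n+1) dvd g v - x"
    and sym: "\<forall>u v. lab u v = lab v u"
  shows "g(n+1 := x) \<in> splines m lab (n+1)"
  unfolding splines_def
proof (intro CollectI conjI ballI allI impI)
  fix v assume "v \<notin> {1..n+1}"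
  then show "(g(n+1 := x)) v = 0" using g unfolding splines_def by auto
next
  fix v assume "v \<in> {1..n+1}"
  then show "0 \<le> (g(n+1 := x)) v" "(g(n+1 := x)) v < m" using g x unfolding splines_def
    by (auto simp: le_Suc_eq)
next
  fix u v assume u: "u \<in> {1..n+1}" and v: "v \<in> {1..n+1}" and uv: "u \<noteq> v"
  show "lab u v dvd (g(n+1 := x)) u - (g(n+1 := x)) v"
  proof (cases "u = n+1")
    case True
    then have "v \<in> {1..n}" using v uv by auto
    then have "lab v (n+1) dvd g v - x" using e by blast
    then have "lab u v dvd x - g v" using True sym by (metis dvd_diff_commute)
    then show ?thesis using True uv by simp
  next
    case False
    note uF = False
    show ?thesis
    proof (cases "v = n+1")
      case True
      then have "u \<in> {1..n}" using u uv by auto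
      then show ?thesis using e True uF by simp
    next
      case False
      then show ?thesis using uF u v uv g unfolding splines_def by auto
    qed
  qed
qed

lemma restrict_spline:
  assumes "s \<in> splines m lab (n+1)"
  shows "(\<lambda>v. if v \<in> {1..n} then s v else 0) \<in> splines m lab n"
  using assms unfolding splines_def by auto



theorem mainTheorem10:
  fixes p q :: int and n i :: nat and lab :: "nat \<Rightarrow> nat \<Rightarrow> int"
  assumes "prime p" and "prime q" and "p \<noteq> q"
    and "\<forall>u v. lab u v = lab v u"
    and "\<forall>u\<in>{1..n+1}. \<forall>v\<in>{1..n+1}. u \<noteq> v \<longrightarrow> lab u v \<in> {p, q}"
    and "1 < i" and "i \<le> n"
    and "\<exists>G F. min_gen_set (p*q) n (splines (p*q) lab n) G
            \<and> G = insert (trivial_spline n) F \<and> trivial_spline n \<notin> F \<and> card F = i - 1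
            \<and> (\<forall>f\<in>F. (\<exists>k. flow_up n f k) \<and> (\<forall>v\<in>{1..n}. p dvd f v))"
  shows "((\<forall>j\<in>{1..n}. lab j (n+1) = p) \<longrightarrow>
           rk (p*q) (n+1) (splines (p*q) lab (n+1)) = rk (p*q) n (splines (p*q) lab n) + 1)
     \<and> ((\<exists>!j. j \<in> {1..n} \<and> lab j (n+1) = q) \<longrightarrow>
           rk (p*q) (n+1) (splines (p*q) lab (n+1)) = rk (p*q) n (splines (p*q) lab n))"
proof -
  note pp = assms(1) and qp = assms(2) and pq = assms(3) and sym = assms(4) and labs = assms(5)
  let ?S = "splines (p*q) lab"
  let ?t = "trivial_spline n"
  have p2: "p \<ge> 2" using pp prime_ge_2_int by blast
  have q2: "q \<ge> 2" using qp prime_ge_2_int by blast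
  have mpos: "p*q > 0" using p2 q2 by simp
  have plt: "p < p*q" using p2 q2 by (simp add: mult_less_cancel_left1)
  have one_lt: "1 < p*q" using p2 plt by linarith
  have ndvd: "\<not> q dvd p" using pp qp pq primes_dvd_imp_eq by blast
  have labd: "\<forall>u\<in>{1..n+1}. \<forall>v\<in>{1..n+1}. u \<noteq> v \<longrightarrow> lab u v dvd p*q"
    using labs by fastforce
  have labdn: "\<forall>u\<in>{1..n}. \<forall>v\<in>{1..n}. u \<noteq> v \<longrightarrow> lab u v dvd p*q"
    using labd by auto
  have n1: "n \<ge> 1" "n \<ge> 2" using assms(6,7) by auto
  obtain G F where min: "min_gen_set (p*q) n (?S n) G" and GF: "G = insert ?t F"
    and tF: "?t \<notin> F" and cardF: "card F = i - 1"
    and Fp: "\<forall>f\<in>F. \<forall>v\<in>{1..n}. p dvd f v"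
    using assms(8) by blast
  have gs: "is_gen_set (p*q) n (?S n) G" and cardrk: "card G = rk (p*q) n (?S n)"
    using min unfolding min_gen_set_def by auto
  have finG: "finite G" and GS: "G \<subseteq> ?S n" using gs unfolding is_gen_set_def by auto
  have finF: "finite F" using finG GF by simp
  have cardG: "card G = i" using GF tF finF cardF assms(6) by simp
  have tG: "?t \<in> G" using GF by simp
  have t1: "\<forall>v\<in>{1..n}. ?t v = 1" unfolding trivial_spline_def by simp
  have sumG: "(\<Sum>g\<in>G. c g * g v) = c ?t + (\<Sum>g\<in>F. c g * g v)" if "v \<in> {1..n}" for c v
    using GF tF finF t1 that by simp
  have pF: "p dvd (\<Sum>g\<in>F. c g * g v)" if "v \<in> {1..n}" for c v
    using Fp that by (intro dvd_sum) auto
  have pgen: "p dvd (\<Sum>g\<in>G. c g * g v) mod (p*q) - c ?t" if "v \<in> {1..n}" for c v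
  proof -
    have "p dvd (\<Sum>g\<in>G. c g * g v) mod (p*q) - (\<Sum>g\<in>G. c g * g v)"
      by (rule dvd_mod_self_diff) simp
    moreover have "p dvd (\<Sum>g\<in>G. c g * g v) - c ?t" using sumG[OF that] pF[OF that] by simp
    ultimately have "p dvd ((\<Sum>g\<in>G. c g * g v) mod (p*q) - (\<Sum>g\<in>G. c g * g v))
        + ((\<Sum>g\<in>G. c g * g v) - c ?t)" by (rule dvd_add)
    then show ?thesis by simp
  qed
  have pconst: "p dvd r u - r v" if r: "r \<in> ?S n" and u: "u \<in> {1..n}" and v: "v \<in> {1..n}" for r u v
  proof -
    obtain c where c: "\<forall>v\<in>{1..n}. r v = (\<Sum>g\<in>G. c g * g v) mod (p*q)"
      using gs r unfolding is_gen_set_def by blast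
    have "p dvd r u - c ?t" using c u pgen[OF u] by simp
    moreover have "p dvd r v - c ?t" using c v pgen[OF v] by simp
    ultimately have "p dvd (r u - c ?t) - (r v - c ?t)" by (rule dvd_diff)
    then show ?thesis by simp
  qed
  have indep: "\<forall>g\<in>G. q dvd d g" if hd: "\<forall>v\<in>{1..n}. q dvd (\<Sum>g\<in>G. d g * g v)" for d
  proof (rule ccontr)
    assume "\<not> (\<forall>g\<in>G. q dvd d g)"
    then obtain g1 where g1: "g1 \<in> G" "\<not> q dvd d g1" by blast
    have "\<exists>g0\<in>F. \<not> q dvd d g0"
    proof (rule ccontr)
      assume "\<not> (\<exists>g0\<in>F. \<not> q dvd d g0)"
      then have allF: "\<forall>g\<in>F. q dvd d g" by blast
      have v1: "(1::nat) \<in> {1..n}" using n1 by simp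
      have "q dvd (\<Sum>g\<in>F. d g * g 1)" using allF by (intro dvd_sum) auto
      moreover have "q dvd d ?t + (\<Sum>g\<in>F. d g * g 1)"
      proof -
        have "q dvd (\<Sum>g\<in>G. d g * g 1)" using hd v1 by blast
        then show ?thesis by (simp only: sumG[OF v1])
      qed
      ultimately have "q dvd (d ?t + (\<Sum>g\<in>F. d g * g 1)) - (\<Sum>g\<in>F. d g * g 1)"
        by (intro dvd_diff)
      then have "q dvd d ?t" by simp
      then have "\<forall>g\<in>G. q dvd d g" using allF GF by auto
      then show False using g1 by blast
    qed
    then obtain g0 where g0F: "g0 \<in> F" and g0n: "\<not> q dvd d g0" by blast
    have g0G: "g0 \<in> G" using GF g0F by auto
    have g0S: "g0 \<in> ?S n" using g0G GS by auto
    have "coprime (d g0) q" using prime_imp_coprime[OF qp g0n] by (simp add: coprime_commute)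
    then obtain u where "[d g0 * u = 1] (mod q)" using cong_solve_coprime_int by blast
    then have u: "q dvd d g0 * u - 1" by (simp add: cong_iff_dvd_diff)
    have "coprime p q" using pp qp pq primes_coprime by blast
    then obtain w where "[p * w = 1] (mod q)" using cong_solve_coprime_int by blast
    then have w: "q dvd p * w - 1" by (simp add: cong_iff_dvd_diff)
    define e where "e g = - (p*w*u*d g)" for g
    have rep: "\<forall>v\<in>{1..n}. g0 v = (\<Sum>g\<in>G-{g0}. e g * g v) mod (p*q)"
    proof
      fix v assume v: "v \<in> {1..n}"
      define X where "X = (\<Sum>g\<in>G-{g0}. d g * g v)"
      have sG: "(\<Sum>g\<in>G. d g * g v) = d g0 * g0 v + X"
        unfolding X_def using finG g0G by (simp add: sum.remove)
      have "q dvd (\<Sum>g\<in>G. d g * g v)" using hd v by blast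
      then have qd: "q dvd d g0 * g0 v + X" by (simp only: sG)
      have "(\<Sum>g\<in>G-{g0}. e g * g v) = (\<Sum>g\<in>G-{g0}. (-(p*w*u)) * (d g * g v))"
        by (rule sum.cong) (simp_all add: e_def algebra_simps)
      also have "\<dots> = - (p*w*u*X)" unfolding X_def sum_distrib_left[symmetric] by simp
      finally have es: "(\<Sum>g\<in>G-{g0}. e g * g v) = - (p*w*u*X)" .
      have pdv: "p dvd g0 v" using Fp g0F v by blast
      have pd2: "p dvd g0 v - (- (p*w*u*X))" using pdv by simp
      have "q dvd (p*w - 1) * (u * d g0) + (d g0 * u - 1)" using u w by simp
      moreover have "1 - p*w*u*d g0 = - ((p*w - 1) * (u * d g0) + (d g0 * u - 1))"
        by (simp add: algebra_simps)
      ultimately have q1: "q dvd 1 - p*w*u*d g0" by (simp only: dvd_minus_iff)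
      have "q dvd g0 v * (1 - p*w*u*d g0) + p*w*u*(d g0 * g0 v + X)"
        by (rule dvd_add[OF dvd_mult[OF q1, of "g0 v"] dvd_mult[OF qd, of "p*w*u"]])
      also have "g0 v * (1 - p*w*u*d g0) + p*w*u*(d g0 * g0 v + X) = g0 v - (- (p*w*u*X))"
        by (simp add: algebra_simps)
      finally have qd2: "q dvd g0 v - (- (p*w*u*X))" .
      have "p*q dvd g0 v - (- (p*w*u*X))" using crt_dvd[OF pp qp pq pd2 qd2] .
      then have "g0 v mod (p*q) = (- (p*w*u*X)) mod (p*q)" by (simp add: mod_eq_dvd_iff)
      moreover have "g0 v mod (p*q) = g0 v" using g0S v unfolding splines_def by simp
      ultimately show "g0 v = (\<Sum>g\<in>G-{g0}. e g * g v) mod (p*q)" using es by simp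
    qed
    have "is_gen_set (p*q) n (?S n) (G - {g0})" using redundant[OF gs g0G rep] .
    then have "rk (p*q) n (?S n) \<le> card (G - {g0})" by (rule rk_le)
    moreover have "card (G - {g0}) < card G" by (rule card_Diff1_less[OF finG g0G])
    ultimately show False using cardrk by linarith
  qed
  let ?R = "\<lambda>s::nat\<Rightarrow>int. (\<lambda>v. if v \<in> {1..n} then s v else 0)"
  have RS: "?R s \<in> ?S n" if "s \<in> ?S (n+1)" for s
    using restrict_spline[OF that] .
  have partb: "rk (p*q) (n+1) (?S (n+1)) = rk (p*q) n (?S n)"
    if B: "\<exists>!j. j \<in> {1..n} \<and> lab j (n+1) = q"
  proof -
    obtain j where j: "j \<in> {1..n}" "lab j (n+1) = q"
      and uniq: "\<And>j'. j' \<in> {1..n} \<Longrightarrow> lab j' (n+1) = q \<Longrightarrow> j' = j"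
      using B by blast
    have labp: "lab v (n+1) = p" if "v \<in> {1..n}" "v \<noteq> j" for v
    proof -
      have "lab v (n+1) \<in> {p, q}" using labs that by auto
      moreover have "lab v (n+1) \<noteq> q" using uniq that by blast
      ultimately show ?thesis by blast
    qed
    define E where "E g = g(n+1 := g j)" for g :: "nat \<Rightarrow> int"
    have ES: "E g \<in> ?S (n+1)" if g: "g \<in> ?S n" for g
      unfolding E_def
    proof (rule extend_spline[OF g _ _ _ sym])
      show "0 \<le> g j" "g j < p*q" using g j unfolding splines_def by auto
      show "\<forall>v\<in>{1..n}. lab v (n + 1) dvd g v - g j"
      proof
        fix v assume v: "v \<in> {1..n}"
        show "lab v (n + 1) dvd g v - g j"
        proof (cases "v = j")
          case True then show ?thesis by simp
        next
          case False then show ?thesis using labp[OF v False] pconst[OF g v j(1)] by simp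
        qed
      qed
    qed
    have sext: "s (n+1) = s j" if s: "s \<in> ?S (n+1)" for s
    proof -
      define v0 where "v0 = (if j = 1 then 2 else (1::nat))"
      have v0: "v0 \<in> {1..n}" "v0 \<noteq> j" using n1 j unfolding v0_def by auto
      have "p dvd ?R s v0 - ?R s j" using pconst[OF RS[OF s] v0(1) j(1)] .
      then have a: "p dvd s v0 - s j" using v0 j by simp
      have "lab v0 (n+1) dvd s v0 - s (n+1)" using s v0 unfolding splines_def by auto
      then have b: "p dvd s v0 - s (n+1)" using labp[OF v0] by simp
      have "p dvd (s v0 - s (n+1)) - (s v0 - s j)" using b a by (rule dvd_diff)
      then have c1: "p dvd s j - s (n+1)" by simp
      have "lab j (n+1) dvd s j - s (n+1)" using s j unfolding splines_def by auto
      then have c2: "q dvd s j - s (n+1)" using j by simp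
      have "p*q dvd s j - s (n+1)" using crt_dvd[OF pp qp pq c1 c2] .
      moreover have "0 \<le> s j" "s j < p*q" "0 \<le> s (n+1)" "s (n+1) < p*q"
        using s j unfolding splines_def by auto
      ultimately show ?thesis using eq_of_dvd by metis
    qed
    have gsb: "is_gen_set (p*q) (n+1) (?S (n+1)) (E ` G)"
    proof (rule family_gen[OF finG])
      show "E ` G \<subseteq> ?S (n+1)" using ES GS by auto
      show "\<forall>s\<in>?S (n+1). \<exists>d. \<forall>v\<in>{1..n+1}. s v = (\<Sum>g\<in>G. d g * E g v) mod (p*q)"
      proof
        fix s assume s: "s \<in> ?S (n+1)"
        obtain c where c: "\<forall>v\<in>{1..n}. ?R s v = (\<Sum>g\<in>G. c g * g v) mod (p*q)"
          using gen_coeffs[OF gs RS[OF s]] by blast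
        have "\<forall>v\<in>{1..n+1}. s v = (\<Sum>g\<in>G. c g * E g v) mod (p*q)"
        proof
          fix v assume v: "v \<in> {1..n+1}"
          show "s v = (\<Sum>g\<in>G. c g * E g v) mod (p*q)"
          proof (cases "v = n+1")
            case True
            have "s v = s j" using True sext[OF s] by simp
            also have "\<dots> = (\<Sum>g\<in>G. c g * g j) mod (p*q)" using c j by auto
            finally show ?thesis using True unfolding E_def by simp
          next
            case False
            then have v': "v \<in> {1..n}" using v by auto
            then show ?thesis using c False unfolding E_def by auto
          qed
        qed
        then show "\<exists>d. \<forall>v\<in>{1..n+1}. s v = (\<Sum>g\<in>G. d g * E g v) mod (p*q)" by blast
      qed
    qed
    have up: "rk (p*q) (n+1) (?S (n+1)) \<le> rk (p*q) n (?S n)"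
      using rk_le[OF gsb] card_image_le[OF finG, of E] cardrk by simp
    obtain G' where gs': "is_gen_set (p*q) (n+1) (?S (n+1)) G'"
      and cG': "card G' = rk (p*q) (n+1) (?S (n+1))"
      using rk_attained[OF gsb] by blast
    have finG': "finite G'" and G'S: "G' \<subseteq> ?S (n+1)" using gs' unfolding is_gen_set_def by auto
    have gsr: "is_gen_set (p*q) n (?S n) (?R ` G')"
    proof (rule family_gen[OF finG'])
      show "?R ` G' \<subseteq> ?S n" using RS G'S by auto
      show "\<forall>s\<in>?S n. \<exists>d. \<forall>v\<in>{1..n}. s v = (\<Sum>g\<in>G'. d g * ?R g v) mod (p*q)"
      proof
        fix s assume s: "s \<in> ?S n"
        obtain c where c: "\<forall>v\<in>{1..n+1}. E s v = (\<Sum>g\<in>G'. c g * g v) mod (p*q)"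
          using gs' ES[OF s] unfolding is_gen_set_def by blast
        have "\<forall>v\<in>{1..n}. s v = (\<Sum>g\<in>G'. c g * ?R g v) mod (p*q)"
        proof
          fix v assume v: "v \<in> {1..n}"
          then have "E s v = (\<Sum>g\<in>G'. c g * g v) mod (p*q)" using c by auto
          then show "s v = (\<Sum>g\<in>G'. c g * ?R g v) mod (p*q)" using v unfolding E_def by auto
        qed
        then show "\<exists>d. \<forall>v\<in>{1..n}. s v = (\<Sum>g\<in>G'. d g * ?R g v) mod (p*q)" by blast
      qed
    qed
    have "rk (p*q) n (?S n) \<le> rk (p*q) (n+1) (?S (n+1))"
      using rk_le[OF gsr] card_image_le[OF finG', of ?R] cG' by simp
    then show ?thesis using up by simp
  qed
  have parta: "rk (p*q) (n+1) (?S (n+1)) = rk (p*q) n (?S n) + 1"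
    if A: "\<forall>j\<in>{1..n}. lab j (n+1) = p"
  proof -
    define h where "h = (\<lambda>v::nat. 0::int)(n+1 := p)"
    define E where "E x = (case x of None \<Rightarrow> h | Some g \<Rightarrow> g(n+1 := if g = ?t then 1 else 0))"
      for x :: "(nat \<Rightarrow> int) option"
    define I where "I = insert None (Some ` G)"
    have finI: "finite I" unfolding I_def using finG by simp
    have cardI: "card I = i + 1" unfolding I_def using finG cardG
      by (simp add: card_image)
    have sumI: "(\<Sum>x\<in>I. f x) = f None + (\<Sum>g\<in>G. f (Some g))" for f :: "_ \<Rightarrow> int"
      unfolding I_def using finG by (simp add: sum.reindex)
    have Ev: "E (Some g) v = g v" if "v \<in> {1..n}" for g v using that unfolding E_def by simp
    have En: "E (Some g) (n+1) = (if g = ?t then 1 else 0)" "E (Some g) (Suc n) = (if g = ?t then 1 else 0)"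
      for g unfolding E_def by simp_all
    have hv: "E None v = 0" if "v \<in> {1..n}" for v using that unfolding E_def h_def by simp
    have hn: "E None (n+1) = p" "E None (Suc n) = p" unfolding E_def h_def by simp_all
    have zeroS: "(\<lambda>v::nat. 0::int) \<in> ?S n" unfolding splines_def using mpos by auto
    have EI: "E x \<in> ?S (n+1)" if "x \<in> I" for x
    proof (cases x)
      case None
      have "h \<in> ?S (n+1)" unfolding h_def
        by (rule extend_spline[OF zeroS _ _ _ sym]) (use p2 plt A in auto)
      then show ?thesis using None unfolding E_def by simp
    next
      case (Some g)
      then have g: "g \<in> G" using that unfolding I_def by auto
      have "g(n+1 := if g = ?t then 1 else 0) \<in> ?S (n+1)"
      proof (rule extend_spline[OF _ _ _ _ sym])
        show "g \<in> ?S n" using g GS by auto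
        show "0 \<le> (if g = ?t then 1 else (0::int))" "(if g = ?t then 1 else 0) < p*q" using one_lt by auto
        show "\<forall>v\<in>{1..n}. lab v (n + 1) dvd g v - (if g = ?t then 1 else 0)"
        proof
          fix v assume v: "v \<in> {1..n}"
          show "lab v (n + 1) dvd g v - (if g = ?t then 1 else 0)"
          proof (cases "g = ?t")
            case True then show ?thesis using t1 v by simp
          next
            case False then have "g \<in> F" using g GF by auto
            then show ?thesis using Fp v A False by simp
          qed
        qed
      qed
      then show ?thesis using Some unfolding E_def by simp
    qed
    have gsa: "is_gen_set (p*q) (n+1) (?S (n+1)) (E ` I)"
    proof (rule family_gen[OF finI])
      show "E ` I \<subseteq> ?S (n+1)" using EI by auto
      show "\<forall>s\<in>?S (n+1). \<exists>d. \<forall>v\<in>{1..n+1}. s v = (\<Sum>x\<in>I. d x * E x v) mod (p*q)"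
      proof
        fix s assume s: "s \<in> ?S (n+1)"
        obtain c where c: "\<forall>v\<in>{1..n}. ?R s v = (\<Sum>g\<in>G. c g * g v) mod (p*q)"
          using gen_coeffs[OF gs RS[OF s]] by blast
        have v1: "(1::nat) \<in> {1..n}" using n1 by simp
        have "p dvd ?R s 1 - c ?t" using c v1 pgen[OF v1, of c] by simp
        then have a: "p dvd s 1 - c ?t" using v1 by simp
        have "lab 1 (n+1) dvd s 1 - s (n+1)" using s n1 unfolding splines_def by auto
        then have b: "p dvd s 1 - s (n+1)" using A v1 by simp
        have "p dvd (s 1 - c ?t) - (s 1 - s (n+1))" using a b by (rule dvd_diff)
        then have "p dvd s (n+1) - c ?t" by simp
        then obtain k where k: "s (n+1) - c ?t = p * k" by blast
        define d where "d x = (case x of None \<Rightarrow> k | Some g \<Rightarrow> c g)" for x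
        have "\<forall>v\<in>{1..n+1}. s v = (\<Sum>x\<in>I. d x * E x v) mod (p*q)"
        proof
          fix v assume v: "v \<in> {1..n+1}"
          show "s v = (\<Sum>x\<in>I. d x * E x v) mod (p*q)"
          proof (cases "v = n+1")
            case True
            have "(\<Sum>g\<in>G. c g * E (Some g) (n+1)) = (\<Sum>g\<in>G. if g = ?t then c g else 0)"
              by (rule sum.cong) (simp_all add: En)
            also have "\<dots> = c ?t" using finG tG by simp
            finally have "(\<Sum>x\<in>I. d x * E x v) = s (n+1)"
              unfolding sumI using True hn k by (simp add: d_def algebra_simps)
            moreover have "0 \<le> s (n+1)" "s (n+1) < p*q" using s unfolding splines_def by auto
            ultimately show ?thesis using True by simp
          next
            case False
            then have v': "v \<in> {1..n}" using v by auto
            have "(\<Sum>x\<in>I. d x * E x v) = (\<Sum>g\<in>G. c g * g v)"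
              unfolding sumI using v' hv Ev by (simp add: d_def)
            then show ?thesis using c v' by simp
          qed
        qed
        then show "\<exists>d. \<forall>v\<in>{1..n+1}. s v = (\<Sum>x\<in>I. d x * E x v) mod (p*q)" by blast
      qed
    qed
    have up: "rk (p*q) (n+1) (?S (n+1)) \<le> i + 1"
      using rk_le[OF gsa] card_image_le[OF finI, of E] cardI by simp
    have low: "i + 1 \<le> rk (p*q) (n+1) (?S (n+1))"
    proof (rule rk_ge[OF gsa])
      fix G' assume gs': "is_gen_set (p*q) (n+1) (?S (n+1)) G'"
      have finG': "finite G'" using gs' unfolding is_gen_set_def by auto
      define D where "D = (\<Pi>\<^sub>E x\<in>I. {0..<q})"
      define D' where "D' = (\<Pi>\<^sub>E g\<in>G'. {0..<q})"
      define \<phi> where "\<phi> c = (\<lambda>v. if v \<in> {1..n+1} then (\<Sum>x\<in>I. c x * E x v) mod q else 0)" for c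
      define \<psi> where "\<psi> c = (\<lambda>v. if v \<in> {1..n+1} then (\<Sum>g\<in>G'. c g * g v) mod q else 0)" for c
      have inj: "inj_on \<phi> D"
      proof (rule inj_onI)
        fix c c' assume cD: "c \<in> D" and c'D: "c' \<in> D" and eq: "\<phi> c = \<phi> c'"
        have rng: "0 \<le> c x" "c x < q" "0 \<le> c' x" "c' x < q" if "x \<in> I" for x
          using cD c'D that unfolding D_def by auto
        have sv: "(\<Sum>x\<in>I. c x * E x v) mod q = (\<Sum>x\<in>I. c' x * E x v) mod q"
          if "v \<in> {1..n+1}" for v
          using fun_cong[OF eq, of v] that unfolding \<phi>_def by simp
        have "\<forall>v\<in>{1..n}. q dvd (\<Sum>g\<in>G. (c (Some g) - c' (Some g)) * g v)"
        proof
          fix v assume v: "v \<in> {1..n}"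
          have e1: "(\<Sum>x\<in>I. c x * E x v) = (\<Sum>g\<in>G. c (Some g) * g v)" for c
            unfolding sumI using v hv Ev by simp
          have "(\<Sum>g\<in>G. c (Some g) * g v) mod q = (\<Sum>g\<in>G. c' (Some g) * g v) mod q"
            using sv[of v] v unfolding e1 by simp
          then have "q dvd (\<Sum>g\<in>G. c (Some g) * g v) - (\<Sum>g\<in>G. c' (Some g) * g v)"
            by (simp add: mod_eq_dvd_iff)
          then show "q dvd (\<Sum>g\<in>G. (c (Some g) - c' (Some g)) * g v)"
            by (simp add: sum_subtractf left_diff_distrib)
        qed
        from indep[OF this] have qg: "\<forall>g\<in>G. q dvd c (Some g) - c' (Some g)" by simp
        have eqG: "c (Some g) = c' (Some g)" if "g \<in> G" for g
        proof -
          have "Some g \<in> I" using that unfolding I_def by simp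
          then show ?thesis using rng[of "Some g"] qg that eq_of_dvd by metis
        qed
        have NI: "None \<in> I" unfolding I_def by simp
        have e2: "(\<Sum>x\<in>I. c x * E x (n+1)) = c None * p + c (Some ?t)" for c
        proof -
          have "(\<Sum>g\<in>G. c (Some g) * E (Some g) (n+1)) = (\<Sum>g\<in>G. if g = ?t then c (Some g) else 0)"
            by (rule sum.cong) (simp_all add: En)
          also have "\<dots> = c (Some ?t)" using finG tG by simp
          finally show ?thesis unfolding sumI using hn by simp
        qed
        have "(c None * p + c (Some ?t)) mod q = (c' None * p + c' (Some ?t)) mod q"
          using sv[of "n+1"] unfolding e2 by simp
        then have "q dvd (c None * p + c (Some ?t)) - (c' None * p + c' (Some ?t))"
          by (simp add: mod_eq_dvd_iff)
        then have "q dvd (c None - c' None) * p" using eqG[OF tG] by (simp add: algebra_simps)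
        then have "q dvd c None - c' None" using qp ndvd prime_dvd_mult_iff by blast
        then have eqN: "c None = c' None" using rng[OF NI] eq_of_dvd by metis
        show "c = c'"
        proof (rule PiE_ext[OF cD[unfolded D_def] c'D[unfolded D_def]])
          fix x assume "x \<in> I"
          then show "c x = c' x" using eqN eqG unfolding I_def by auto
        qed
      qed
      have sub: "\<phi> ` D \<subseteq> \<psi> ` D'"
      proof
        fix y assume "y \<in> \<phi> ` D"
        then obtain c where cD: "c \<in> D" and y: "y = \<phi> c" by blast
        define \<sigma> where "\<sigma> = (\<lambda>v. if v \<in> {1..n+1} then (\<Sum>x\<in>I. c x * E x v) mod (p*q) else 0)"
        have "\<sigma> \<in> ?S (n+1)" unfolding \<sigma>_def
          by (rule comb_spline[OF finI _ mpos labd]) (use EI in auto)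
        then obtain c'' where c'': "\<forall>v\<in>{1..n+1}. \<sigma> v = (\<Sum>g\<in>G'. c'' g * g v) mod (p*q)"
          using gs' unfolding is_gen_set_def by blast
        define c' where "c' = restrict (\<lambda>g. c'' g mod q) G'"
        have c'D: "c' \<in> D'" unfolding c'_def D'_def using q2 by auto
        have "\<phi> c = \<psi> c'"
        proof
          fix v show "\<phi> c v = \<psi> c' v"
          proof (cases "v \<in> {1..n+1}")
            case True
            have qdvd: "q dvd p*q" by simp
            have "(\<Sum>g\<in>G'. c' g * g v) mod q = (\<Sum>g\<in>G'. (c'' g mod q) * g v) mod q"
              unfolding c'_def by (simp cong: sum.cong)
            also have "\<dots> = (\<Sum>g\<in>G'. c'' g * g v) mod q" by (rule sum_mod_coef)
            also have "\<dots> = ((\<Sum>g\<in>G'. c'' g * g v) mod (p*q)) mod q"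
              using qdvd by (simp add: mod_mod_cancel)
            also have "\<dots> = \<sigma> v mod q" using c'' True by simp
            also have "\<dots> = ((\<Sum>x\<in>I. c x * E x v) mod (p*q)) mod q" unfolding \<sigma>_def using True by simp
            also have "\<dots> = (\<Sum>x\<in>I. c x * E x v) mod q" using qdvd by (simp add: mod_mod_cancel)
            finally show ?thesis unfolding \<phi>_def \<psi>_def using True by simp
          next
            case False then show ?thesis unfolding \<phi>_def \<psi>_def by auto
          qed
        qed
        then show "y \<in> \<psi> ` D'" using y c'D by blast
      qed
      have finD': "finite D'" unfolding D'_def using finG' by (simp add: finite_PiE)
      have "card D = card (\<phi> ` D)" using card_image[OF inj] by simp
      also have "\<dots> \<le> card (\<psi> ` D')" using sub finD' by (simp add: card_mono)
      also have "\<dots> \<le> card D'" using finD' by (rule card_image_le)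
      finally have cle: "card D \<le> card D'" .
      have "card D = nat q ^ (i+1)" unfolding D_def using finI cardI by (simp add: card_PiE)
      moreover have "card D' = nat q ^ card G'" unfolding D'_def using finG' by (simp add: card_PiE)
      ultimately have "nat q ^ (i+1) \<le> nat q ^ card G'" using cle by simp
      moreover have "1 < nat q" using q2 by simp
      ultimately show "i + 1 \<le> card G'" using power_le_imp_le_exp by blast

    qed
    show ?thesis using up low cardG cardrk by simp
  qed
  show ?thesis using parta partb by blast
qed

end
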